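(* Let $T$ be a permutation tableau, and let $P$ be an alternating path of $T$ with label sequence $p_1p_2\cdots p_r$. Here $p_1$ is the label of the starting dot and $p_r$ is the label of the final black dot. Then $p_1,p_2,\ldots,p_r$ occur in the permutation $\xi(T)$ in this left-to-right order, i.e. $p_1p_2\cdots p_r$ is a subsequence of $\xi(T)$.
   Context: Permutation tableaux. Draw a Ferrers diagram in English convention: rows are left-justified, row lengths weakly decrease from top to bottom, and every column is nonempty. Rows of length zero are allowed. A permutation tableau $T$ is a filling of the cells of such a diagram with 0's and 1's satisfying two conditions: (i) every column contains at least one 1; (ii) no cell containing 0 has both a 1 above it in its column and a 1 to its left in its row. Its length $n$ is the number of rows plus the number of columns. Labels. The southeast boundary path of $n$ unit south/west steps, from the top-right corner to the bottom-left corner, has its steps labeled $1,\ldots,n$ in order. Each row gets the label of its south step, and each column the label of its west step. $(i,j)$ denotes the cell in row $i$ and column $j$. Zeros, ones and rows. A 1 is topmost if there is no 1 above it in its column. A 0 is restricted if there is a 1 above it in its column. A rightmost restricted 0 is a restricted 0 with no restricted 0 to its right in its row. A row is unrestricted if it contains no restricted 0; empty rows are unrestricted. Dots. Black dots are placed on the topmost 1's (one per column), each labeled by its column label. White dots are placed on the rightmost restricted 0's (one per restricted row), each labeled by its row label. Alternating paths. An alternating path is a sequence of dots, identified with the sequence of their labels, built as follows. - From a white dot in cell $(i,j)$, the next dot is the black dot of column $j$. - From a black dot in cell $(i,j)$: if row $i$ is unrestricted, the path ends; otherwise the next dot is the white dot of row $i$. The bijection $\xi$. Start with the labels of the unrestricted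 rows in increasing order. Then process the column labels in decreasing order. For a column $j$: 1. If its black dot is in cell $(i,j)$, insert $j$ immediately to the left of $i$. 2. If column $j$ has white dots in rows $i_1<\cdots<i_k$, insert $i_1\cdots i_k$, in increasing order, immediately to the left of $j$. The result is the permutation $\xi(T)$ of $[n]$. *)

theory Defs
  imports Main "HOL-Library.Sublist"
begin

text \<open>
A permutation tableau of length n is encoded by its southeast boundary path:
R is the set of labels of the south steps (= row labels); the remaining labels
in {1..n} are the west steps (= column labels).  With the labelling of the
boundary path, row i and column j intersect in a cell of the Ferrers diagram
iff i < j.  Rows are ordered top to bottom by increasing label, columns
right to left by increasing label.  The filling is T :: nat => nat => bool
(True = 1, False = 0), only meaningful on cells.
\<close>

definition cols :: "nat \<Rightarrow> nat set \<Rightarrow> nat set" where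
  "cols n R = {1..n} - R"

definition is_cell :: "nat \<Rightarrow> nat set \<Rightarrow> nat \<Rightarrow> nat \<Rightarrow> bool" where
  "is_cell n R i j \<longleftrightarrow> i \<in> R \<and> j \<in> cols n R \<and> i < j"

definition perm_tableau :: "nat \<Rightarrow> nat set \<Rightarrow> (nat \<Rightarrow> nat \<Rightarrow> bool) \<Rightarrow> bool" where
  "perm_tableau n R T \<longleftrightarrow>
     R \<subseteq> {1..n} \<and>
     \<comment> \<open>every column of the Ferrers diagram is nonempty\<close>
     (\<forall>j \<in> cols n R. \<exists>i. is_cell n R i j) \<and>
     \<comment> \<open>(i) every column contains a 1\<close>
     (\<forall>j \<in> cols n R. \<exists>i. is_cell n R i j \<and> T i j) \<and>
     \<comment> \<open>(ii) no 0 with a 1 above it and a 1 to its left\<close>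
     (\<forall>i j. is_cell n R i j \<and> \<not> T i j \<longrightarrow>
        \<not> ((\<exists>i'. is_cell n R i' j \<and> i' < i \<and> T i' j) \<and>
           (\<exists>j'. is_cell n R i j' \<and> j < j' \<and> T i j')))"

definition topmost_one :: "nat \<Rightarrow> nat set \<Rightarrow> (nat \<Rightarrow> nat \<Rightarrow> bool) \<Rightarrow> nat \<Rightarrow> nat \<Rightarrow> bool" where
  "topmost_one n R T i j \<longleftrightarrow> is_cell n R i j \<and> T i j \<and>
     \<not> (\<exists>i'. is_cell n R i' j \<and> i' < i \<and> T i' j)"

definition restricted_zero :: "nat \<Rightarrow> nat set \<Rightarrow> (nat \<Rightarrow> nat \<Rightarrow> bool) \<Rightarrow> nat \<Rightarrow> nat \<Rightarrow> bool" where
  "restricted_zero n R T i j \<longleftrightarrow> is_cell n R i j \<and> \<not> T i j \<and>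
     (\<exists>i'. is_cell n R i' j \<and> i' < i \<and> T i' j)"

text \<open>To the right in a row = smaller column label.\<close>
definition rightmost_restricted_zero :: "nat \<Rightarrow> nat set \<Rightarrow> (nat \<Rightarrow> nat \<Rightarrow> bool) \<Rightarrow> nat \<Rightarrow> nat \<Rightarrow> bool" where
  "rightmost_restricted_zero n R T i j \<longleftrightarrow> restricted_zero n R T i j \<and>
     \<not> (\<exists>j'. restricted_zero n R T i j' \<and> j' < j)"

definition restricted_row :: "nat \<Rightarrow> nat set \<Rightarrow> (nat \<Rightarrow> nat \<Rightarrow> bool) \<Rightarrow> nat \<Rightarrow> bool" where
  "restricted_row n R T i \<longleftrightarrow> i \<in> R \<and> (\<exists>j. restricted_zero n R T i j)"

definition unrestricted_row :: "nat \<Rightarrow> nat set \<Rightarrow> (nat \<Rightarrow> nat \<Rightarrow> bool) \<Rightarrow> nat \<Rightarrow> bool" where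
  "unrestricted_row n R T i \<longleftrightarrow> i \<in> R \<and> \<not> (\<exists>j. restricted_zero n R T i j)"

definition black_row :: "nat \<Rightarrow> nat set \<Rightarrow> (nat \<Rightarrow> nat \<Rightarrow> bool) \<Rightarrow> nat \<Rightarrow> nat" where
  "black_row n R T j = (THE i. topmost_one n R T i j)"

definition white_col :: "nat \<Rightarrow> nat set \<Rightarrow> (nat \<Rightarrow> nat \<Rightarrow> bool) \<Rightarrow> nat \<Rightarrow> nat" where
  "white_col n R T i = (THE j. rightmost_restricted_zero n R T i j)"

datatype dot = Black nat | White nat

fun dot_label :: "dot \<Rightarrow> nat" where
  "dot_label (Black j) = j"
| "dot_label (White i) = i"

fun is_dot :: "nat \<Rightarrow> nat set \<Rightarrow> (nat \<Rightarrow> nat \<Rightarrow> bool) \<Rightarrow> dot \<Rightarrow> bool" where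
  "is_dot n R T (Black j) \<longleftrightarrow> (\<exists>i. topmost_one n R T i j)"
| "is_dot n R T (White i) \<longleftrightarrow> (\<exists>j. rightmost_restricted_zero n R T i j)"

fun next_dot :: "nat \<Rightarrow> nat set \<Rightarrow> (nat \<Rightarrow> nat \<Rightarrow> bool) \<Rightarrow> dot \<Rightarrow> dot option" where
  "next_dot n R T (White i) = Some (Black (white_col n R T i))"
| "next_dot n R T (Black j) =
     (let i = black_row n R T j in
      if unrestricted_row n R T i then None else Some (White i))"

definition alt_path :: "nat \<Rightarrow> nat set \<Rightarrow> (nat \<Rightarrow> nat \<Rightarrow> bool) \<Rightarrow> dot list \<Rightarrow> bool" where
  "alt_path n R T ds \<longleftrightarrow> ds \<noteq> [] \<and> is_dot n R T (hd ds) \<and>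
     (\<forall>k. Suc k < length ds \<longrightarrow> next_dot n R T (ds ! k) = Some (ds ! Suc k)) \<and>
     next_dot n R T (last ds) = None"

definition ins_before :: "'a list \<Rightarrow> 'a \<Rightarrow> 'a list \<Rightarrow> 'a list" where
  "ins_before xs y w = takeWhile (\<lambda>z. z \<noteq> y) w @ xs @ dropWhile (\<lambda>z. z \<noteq> y) w"

definition xi_step :: "nat \<Rightarrow> nat set \<Rightarrow> (nat \<Rightarrow> nat \<Rightarrow> bool) \<Rightarrow> nat list \<Rightarrow> nat \<Rightarrow> nat list" where
  "xi_step n R T w j =
     (let w1 = ins_before [j] (black_row n R T j) w
      in ins_before (sorted_list_of_set {i. rightmost_restricted_zero n R T i j}) j w1)"

definition xi :: "nat \<Rightarrow> nat set \<Rightarrow> (nat \<Rightarrow> nat \<Rightarrow> bool) \<Rightarrow> nat list" where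
  "xi n R T = foldl (xi_step n R T)
     (sorted_list_of_set {i. unrestricted_row n R T i})
     (rev (sorted_list_of_set (cols n R)))"

end

theory Submission
  imports Defs
begin

lemma ins_before_split: "ins_before xs y w = takeWhile (\<lambda>z. z \<noteq> y) w @ xs @ dropWhile (\<lambda>z. z \<noteq> y) w"
  by (simp add: ins_before_def)

lemma set_ins_before[simp]: "set (ins_before xs y w) = set w \<union> set xs"
proof -
  have "set w = set (takeWhile (\<lambda>z. z \<noteq> y) w) \<union> set (dropWhile (\<lambda>z. z \<noteq> y) w)"
    by (metis set_append takeWhile_dropWhile_id)
  then show ?thesis by (auto simp: ins_before_def)
qed

lemma subseq_ins_before: "subseq w (ins_before xs y w)"
proof -
  have "subseq (takeWhile (\<lambda>z. z \<noteq> y) w @ dropWhile (\<lambda>z. z \<noteq> y) w)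
     (takeWhile (\<lambda>z. z \<noteq> y) w @ (xs @ dropWhile (\<lambda>z. z \<noteq> y) w))"
    by (rule list_emb_append_mono) (auto intro: list_emb_refl)
  then show ?thesis by (simp add: ins_before_def)
qed

lemma distinct_ins_before:
  assumes "distinct w" "distinct xs" "set xs \<inter> set w = {}"
  shows "distinct (ins_before xs y w)"
proof -
  let ?t = "takeWhile (\<lambda>z. z \<noteq> y) w" and ?d = "dropWhile (\<lambda>z. z \<noteq> y) w"
  have "distinct (?t @ ?d)" using assms(1) by simp
  then have "distinct ?t" "distinct ?d" "set ?t \<inter> set ?d = {}" by (simp_all only: distinct_append)
  moreover have "set ?t \<subseteq> set w" "set ?d \<subseteq> set w"
    by (metis set_append takeWhile_dropWhile_id Un_upper1 Un_upper2)+
  ultimately show ?thesis using assms by (auto simp: ins_before_def)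
qed

lemma dropWhile_in: "y \<in> set w \<Longrightarrow> \<exists>r. dropWhile (\<lambda>z. z \<noteq> y) w = y # r"
  by (induction w) auto

lemma subseq_pair_ins:
  assumes "a \<in> set xs" "y \<in> set w"
  shows "subseq [a, y] (ins_before xs y w)"
proof -
  obtain r where r: "dropWhile (\<lambda>z. z \<noteq> y) w = y # r" using dropWhile_in[OF assms(2)] by blast
  have "subseq [a] xs" using assms(1) by (simp add: subseq_singleton_left)
  moreover have "subseq [y] (y # r)" by simp
  ultimately have "subseq ([a] @ [y]) (xs @ y # r)" by (rule list_emb_append_mono)
  then have "subseq [a, y] (takeWhile (\<lambda>z. z \<noteq> y) w @ xs @ y # r)"
    by (simp add: subseq_drop_many)
  then show ?thesis using r by (simp add: ins_before_def)
qed

definition Wh :: "nat \<Rightarrow> nat set \<Rightarrow> (nat \<Rightarrow> nat \<Rightarrow> bool) \<Rightarrow> nat \<Rightarrow> nat set" where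
  "Wh n R T j = {i. rightmost_restricted_zero n R T i j}"

lemma rrz_cell: "rightmost_restricted_zero n R T i j \<Longrightarrow> is_cell n R i j"
  by (simp add: rightmost_restricted_zero_def restricted_zero_def)

lemma finite_Wh: "finite (Wh n R T j)"
proof -
  have "Wh n R T j \<subseteq> {..<j}" by (auto simp: Wh_def is_cell_def dest: rrz_cell)
  then show ?thesis using finite_subset by blast
qed

lemma xi_step_alt: "xi_step n R T w j =
   ins_before (sorted_list_of_set (Wh n R T j)) j (ins_before [j] (black_row n R T j) w)"
  by (simp add: xi_step_def Wh_def Let_def)

lemma set_xi_step: "set (xi_step n R T w j) = set w \<union> {j} \<union> Wh n R T j"
  by (auto simp: xi_step_alt finite_Wh)

lemma subseq_xi_step: "subseq w (xi_step n R T w j)"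
  unfolding xi_step_alt
  by (rule subseq_order.order_trans[OF subseq_ins_before subseq_ins_before])

lemma subseq_fold: "subseq w (foldl (xi_step n R T) w cs)"
proof (induction cs arbitrary: w)
  case Nil then show ?case by simp
next
  case (Cons c cs)
  have "subseq (xi_step n R T w c) (foldl (xi_step n R T) (xi_step n R T w c) cs)" by (rule Cons.IH)
  then show ?case using subseq_order.order_trans[OF subseq_xi_step] by simp
qed

lemma set_fold: "set (foldl (xi_step n R T) w cs) = set w \<union> set cs \<union> \<Union>(Wh n R T ` set cs)"
  by (induction cs arbitrary: w) (auto simp: set_xi_step)

lemma step_B1: "i \<in> Wh n R T j \<Longrightarrow> subseq [i, j] (xi_step n R T w j)"
  unfolding xi_step_alt
  by (rule subseq_pair_ins) (auto simp: finite_Wh)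

lemma step_B2: "i \<in> set w \<Longrightarrow> black_row n R T j = i \<Longrightarrow> subseq [j, i] (xi_step n R T w j)"
  unfolding xi_step_alt
  by (rule subseq_order.order_trans[OF _ subseq_ins_before]) (auto intro: subseq_pair_ins)


lemma rrz_unique:
  "rightmost_restricted_zero n R T i j1 \<Longrightarrow> rightmost_restricted_zero n R T i j2 \<Longrightarrow> j1 = j2"
  unfolding rightmost_restricted_zero_def by (meson linorder_neqE_nat)

lemma top_unique:
  "topmost_one n R T i1 j \<Longrightarrow> topmost_one n R T i2 j \<Longrightarrow> i1 = i2"
  unfolding topmost_one_def by (meson linorder_neqE_nat)

lemma white_col_eq: "rightmost_restricted_zero n R T i j \<Longrightarrow> white_col n R T i = j"
  unfolding white_col_def by (blast intro: the_equality rrz_unique)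

lemma black_row_eq: "topmost_one n R T i j \<Longrightarrow> black_row n R T j = i"
  unfolding black_row_def by (blast intro: the_equality top_unique)

lemma col_has_top:
  assumes P: "perm_tableau n R T" and j: "j \<in> cols n R"
  shows "\<exists>i. topmost_one n R T i j"
proof -
  from P j obtain i where "is_cell n R i j \<and> T i j" unfolding perm_tableau_def by blast
  then have ex: "\<exists>i. is_cell n R i j \<and> T i j" by blast
  let ?i = "LEAST i. is_cell n R i j \<and> T i j"
  have "is_cell n R ?i j \<and> T ?i j" using LeastI_ex[OF ex] .
  moreover have "\<not> (\<exists>i'. is_cell n R i' j \<and> i' < ?i \<and> T i' j)"
    using not_less_Least by blast
  ultimately show ?thesis unfolding topmost_one_def by blast
qed

lemma restricted_has_rrz:
  assumes "i \<in> R" "\<not> unrestricted_row n R T i"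
  shows "\<exists>j. rightmost_restricted_zero n R T i j"
proof -
  from assms have ex: "\<exists>j. restricted_zero n R T i j" by (simp add: unrestricted_row_def)
  let ?j = "LEAST j. restricted_zero n R T i j"
  have "restricted_zero n R T i ?j" using LeastI_ex[OF ex] .
  moreover have "\<not> (\<exists>j'. restricted_zero n R T i j' \<and> j' < ?j)"
    using not_less_Least by blast
  ultimately show ?thesis unfolding rightmost_restricted_zero_def by blast
qed

lemma rrz_after_top:
  assumes P: "perm_tableau n R T" and t: "topmost_one n R T i j"
    and r: "rightmost_restricted_zero n R T i j'"
  shows "j < j'"
proof (rule ccontr)
  assume "\<not> j < j'"
  moreover have "j \<noteq> j'" using t r
    by (auto simp: topmost_one_def rightmost_restricted_zero_def restricted_zero_def)
  ultimately have "j' < j" by simp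
  with P t r show False
    unfolding perm_tableau_def topmost_one_def rightmost_restricted_zero_def restricted_zero_def
    by blast
qed

lemma rrz_not_unrestricted: "rightmost_restricted_zero n R T i j \<Longrightarrow> \<not> unrestricted_row n R T i"
  by (auto simp: rightmost_restricted_zero_def unrestricted_row_def)

lemma cell_R: "is_cell n R i j \<Longrightarrow> i \<in> R \<and> j \<in> cols n R \<and> j \<notin> R \<and> i < j"
  by (simp add: is_cell_def cols_def)

abbreviation UR where "UR n R T \<equiv> {i. unrestricted_row n R T i}"

lemma fold_distinct:
  assumes "distinct w" "set w \<subseteq> UR n R T \<union> D \<union> \<Union>(Wh n R T ` D)" "D \<subseteq> cols n R"
    "distinct cs" "set cs \<subseteq> cols n R" "set cs \<inter> D = {}"
  shows "distinct (foldl (xi_step n R T) w cs)"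
  using assms
proof (induction cs arbitrary: w D)
  case Nil then show ?case by simp
next
  case (Cons j cs)
  have jC: "j \<in> cols n R" "j \<notin> D" using Cons.prems by auto
  have jR: "j \<notin> R" using jC by (simp add: cols_def)
  have DR: "D \<inter> R = {}" using Cons.prems(3) by (auto simp: cols_def)
  have jw: "j \<notin> set w"
  proof
    assume "j \<in> set w"
    with Cons.prems(2) jC jR show False
      by (auto simp: unrestricted_row_def Wh_def dest!: rrz_cell cell_R)
  qed
  let ?w1 = "ins_before [j] (black_row n R T j) w"
  have d1: "distinct ?w1" using Cons.prems(1) jw by (intro distinct_ins_before) auto
  have disj: "Wh n R T j \<inter> set ?w1 = {}"
  proof (rule ccontr)
    assume "Wh n R T j \<inter> set ?w1 \<noteq> {}"
    then obtain i where i: "i \<in> Wh n R T j" "i \<in> set w \<or> i = j" by auto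
    have ir: "rightmost_restricted_zero n R T i j" using i(1) by (simp add: Wh_def)
    have iR: "i \<in> R" using rrz_cell[OF ir] cell_R by blast
    show False
    proof (cases "i = j")
      case True then show ?thesis using iR jR by simp
    next
      case False
      then have "i \<in> set w" using i by auto
      then have "i \<in> UR n R T \<or> i \<in> D \<or> (\<exists>c\<in>D. i \<in> Wh n R T c)" using Cons.prems(2) by auto
      then show ?thesis
      proof (elim disjE)
        assume "i \<in> UR n R T" then show False using rrz_not_unrestricted[OF ir] by simp
      next
        assume "i \<in> D" then show False using iR DR by auto
      next
        assume "\<exists>c\<in>D. i \<in> Wh n R T c"
        then obtain c where "c \<in> D" "rightmost_restricted_zero n R T i c" by (auto simp: Wh_def)
        then show False using rrz_unique[OF ir] jC by auto
      qed
    qed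
  qed
  have d2: "distinct (xi_step n R T w j)"
    unfolding xi_step_alt
    by (rule distinct_ins_before[OF d1]) (use disj in \<open>auto simp: finite_Wh\<close>)
  have s2: "set (xi_step n R T w j) \<subseteq> UR n R T \<union> insert j D \<union> \<Union>(Wh n R T ` insert j D)"
    using Cons.prems(2) by (auto simp: set_xi_step)
  show ?case
    using Cons.IH[OF d2 s2] Cons.prems by auto
qed

lemma finite_cols: "finite (cols n R)" by (simp add: cols_def)

lemma finite_UR: "perm_tableau n R T \<Longrightarrow> finite (UR n R T)"
  by (rule finite_subset[of _ "{1..n}"]) (auto simp: perm_tableau_def unrestricted_row_def)

lemma xi_distinct: "perm_tableau n R T \<Longrightarrow> distinct (xi n R T)"
  unfolding xi_def
  by (rule fold_distinct[where D = "{}"]) (auto simp: finite_UR finite_cols)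

lemma xi_set: "perm_tableau n R T \<Longrightarrow>
  set (xi n R T) = UR n R T \<union> cols n R \<union> \<Union>(Wh n R T ` cols n R)"
  unfolding xi_def by (simp add: set_fold finite_UR finite_cols)

lemma xi_split:
  assumes "j \<in> cols n R"
  shows "\<exists>as bs. xi n R T = foldl (xi_step n R T)
     (xi_step n R T (foldl (xi_step n R T) (sorted_list_of_set (UR n R T)) as) j) bs
     \<and> (\<forall>x\<in>cols n R. j < x \<longrightarrow> x \<in> set as)"
proof -
  let ?cs = "rev (sorted_list_of_set (cols n R))"
  have "j \<in> set ?cs" using assms finite_cols by simp
  then obtain as bs where cs: "?cs = as @ j # bs" by (meson split_list)
  have sw: "sorted_wrt (>) ?cs"
    by (simp add: sorted_wrt_rev)
  have "\<forall>x\<in>set bs. j > x" using sw unfolding cs by (simp add: sorted_wrt_append)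
  moreover have "\<forall>x\<in>cols n R. x \<in> set ?cs" using finite_cols by simp
  ultimately have "\<forall>x\<in>cols n R. j < x \<longrightarrow> x \<in> set as"
  proof (intro ballI impI)
    fix x assume a: "\<forall>x\<in>set bs. j > x" "\<forall>x\<in>cols n R. x \<in> set ?cs" "x \<in> cols n R" "j < x"
    then have "x \<in> set (as @ j # bs)" unfolding cs by blast
    moreover have "x \<notin> set bs" using a by auto
    ultimately show "x \<in> set as" using a(4) by auto
  qed
  moreover have "xi n R T = foldl (xi_step n R T)
     (xi_step n R T (foldl (xi_step n R T) (sorted_list_of_set (UR n R T)) as) j) bs"
    unfolding xi_def cs by simp
  ultimately show ?thesis by blast
qed

lemma next_valid:
  assumes P: "perm_tableau n R T" and d: "is_dot n R T d" and nx: "next_dot n R T d = Some d'"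
  shows "is_dot n R T d'"
proof (cases d)
  case (White i)
  then obtain j where r: "rightmost_restricted_zero n R T i j" using d by auto
  have "d' = Black j" using nx White white_col_eq[OF r] by simp
  moreover have "j \<in> cols n R" using rrz_cell[OF r] cell_R by blast
  ultimately show ?thesis using col_has_top[OF P] by simp
next
  case (Black j)
  then obtain i where t: "topmost_one n R T i j" using d by auto
  have br: "black_row n R T j = i" by (rule black_row_eq[OF t])
  have nu: "\<not> unrestricted_row n R T i" and d': "d' = White i"
    using nx Black br by (auto simp: Let_def split: if_splits)
  have "i \<in> R" using t cell_R by (auto simp: topmost_one_def)
  then show ?thesis using restricted_has_rrz[OF _ nu] d' by simp
qed

lemma pair_subseq:
  assumes P: "perm_tableau n R T" and d: "is_dot n R T d" and nx: "next_dot n R T d = Some d'"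
  shows "subseq [dot_label d, dot_label d'] (xi n R T)"
proof (cases d)
  case (White i)
  then obtain j where r: "rightmost_restricted_zero n R T i j" using d by auto
  have d': "d' = Black j" using nx White white_col_eq[OF r] by simp
  have jC: "j \<in> cols n R" using rrz_cell[OF r] cell_R by blast
  obtain as bs where xs: "xi n R T = foldl (xi_step n R T)
     (xi_step n R T (foldl (xi_step n R T) (sorted_list_of_set (UR n R T)) as) j) bs"
    using xi_split[OF jC] by blast
  have "i \<in> Wh n R T j" using r by (simp add: Wh_def)
  then have "subseq [i, j] (xi_step n R T (foldl (xi_step n R T) (sorted_list_of_set (UR n R T)) as) j)"
    by (rule step_B1)
  then have "subseq [i, j] (xi n R T)" unfolding xs by (rule subseq_order.order_trans[OF _ subseq_fold])
  then show ?thesis using White d' by simp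
next
  case (Black j)
  then obtain i where t: "topmost_one n R T i j" using d by auto
  have br: "black_row n R T j = i" by (rule black_row_eq[OF t])
  have nu: "\<not> unrestricted_row n R T i" and d': "d' = White i"
    using nx Black br by (auto simp: Let_def split: if_splits)
  have "i \<in> R" using t cell_R by (auto simp: topmost_one_def)
  then obtain j' where r: "rightmost_restricted_zero n R T i j'" using restricted_has_rrz[OF _ nu] by blast
  have jj: "j < j'" by (rule rrz_after_top[OF P t r])
  have jC: "j \<in> cols n R" using t cell_R by (auto simp: topmost_one_def)
  have j'C: "j' \<in> cols n R" using rrz_cell[OF r] cell_R by blast
  obtain as bs where xs: "xi n R T = foldl (xi_step n R T)
     (xi_step n R T (foldl (xi_step n R T) (sorted_list_of_set (UR n R T)) as) j) bs"
    and as: "\<forall>x\<in>cols n R. j < x \<longrightarrow> x \<in> set as"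
    using xi_split[OF jC] by blast
  have "j' \<in> set as" using as jj j'C by blast
  moreover have "i \<in> Wh n R T j'" using r by (simp add: Wh_def)
  ultimately have "i \<in> set (foldl (xi_step n R T) (sorted_list_of_set (UR n R T)) as)"
    by (auto simp: set_fold)
  then have "subseq [j, i] (xi_step n R T (foldl (xi_step n R T) (sorted_list_of_set (UR n R T)) as) j)"
    using br by (rule step_B2)
  then have "subseq [j, i] (xi n R T)" unfolding xs by (rule subseq_order.order_trans[OF _ subseq_fold])
  then show ?thesis using Black d' by simp
qed

lemma label_in:
  assumes P: "perm_tableau n R T" and d: "is_dot n R T d"
  shows "dot_label d \<in> set (xi n R T)"
proof (cases d)
  case (White i)
  then obtain j where r: "rightmost_restricted_zero n R T i j" using d by auto
  have jC: "j \<in> cols n R" using rrz_cell[OF r] cell_R by blast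
  have "i \<in> Wh n R T j" using r by (simp add: Wh_def)
  then show ?thesis using White jC xi_set[OF P] by auto
next
  case (Black j)
  then obtain i where t: "topmost_one n R T i j" using d by auto
  have jC: "j \<in> cols n R" using t cell_R by (auto simp: topmost_one_def)
  then show ?thesis using Black xi_set[OF P] by auto
qed

lemma chain_subseq:
  assumes "distinct ys" "set xs \<subseteq> set ys"
    "\<forall>k. Suc k < length xs \<longrightarrow> subseq [xs ! k, xs ! Suc k] ys"
  shows "subseq xs ys"
  using assms
proof (induction xs)
  case Nil then show ?case by simp
next
  case (Cons a xs)
  note IH0 = Cons.IH and P0 = Cons.prems
  show ?case
  proof (cases xs)
    case Nil then show ?thesis using P0 by (simp add: subseq_singleton_left)
  next
    case (Cons b rest)
    have IH1: "subseq xs ys"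
    proof (rule IH0)
      show "distinct ys" using P0 by simp
      show "set xs \<subseteq> set ys" using P0 by simp
      show "\<forall>k. Suc k < length xs \<longrightarrow> subseq [xs ! k, xs ! Suc k] ys"
      proof (intro allI impI)
        fix k assume "Suc k < length xs"
        then have "Suc (Suc k) < length (a # xs)" by simp
        then have "subseq [(a # xs) ! Suc k, (a # xs) ! Suc (Suc k)] ys" using P0(3) by blast
        then show "subseq [xs ! k, xs ! Suc k] ys" by simp
      qed
    qed
    have IH: "subseq (b # rest) ys" using IH1 \<open>xs = b # rest\<close> by simp
    have ab: "subseq [a, b] ys" using P0(3) \<open>xs = b # rest\<close>
      by (metis length_Cons nth_Cons_0 nth_Cons_Suc zero_less_Suc Suc_less_eq)
    then obtain us vs where ys: "ys = us @ a # vs" "b \<in> set vs"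
      by (auto simp: list_emb_append_mono dest!: list_emb_ConsD)
    have "b \<notin> set (us @ [a])" using P0(1) ys by auto
    have "subseq (b # rest) vs"
      using IH \<open>b \<notin> set (us @ [a])\<close> unfolding ys(1)
    proof (induction us)
      case Nil then show ?case by (auto split: if_splits)
    next
      case (Cons u us) then show ?case by (auto split: if_splits)
    qed
    then show ?thesis unfolding ys(1) \<open>xs = b # rest\<close> by (simp add: subseq_drop_many)
  qed
qed

theorem lemma2p4:
  fixes n :: nat and R :: "nat set" and T :: "nat \<Rightarrow> nat \<Rightarrow> bool" and ds :: "dot list"
  assumes "perm_tableau n R T"
    and "alt_path n R T ds"
  shows "subseq (map dot_label ds) (xi n R T)"
proof -
  have ne: "ds \<noteq> []" and h: "is_dot n R T (hd ds)"
    and nx: "\<And>k. Suc k < length ds \<Longrightarrow> next_dot n R T (ds ! k) = Some (ds ! Suc k)"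
    using assms(2) unfolding alt_path_def by auto
  have valid: "k < length ds \<Longrightarrow> is_dot n R T (ds ! k)" for k
  proof (induction k)
    case 0 then show ?case using h ne by (simp add: hd_conv_nth)
  next
    case (Suc k) then show ?case using next_valid[OF assms(1) _ nx] by simp
  qed
  show ?thesis
  proof (rule chain_subseq[OF xi_distinct[OF assms(1)]])
    show "set (map dot_label ds) \<subseteq> set (xi n R T)"
      using valid label_in[OF assms(1)] by (auto simp: in_set_conv_nth)
    show "\<forall>k. Suc k < length (map dot_label ds) \<longrightarrow>
        subseq [map dot_label ds ! k, map dot_label ds ! Suc k] (xi n R T)"
      using pair_subseq[OF assms(1) valid nx] by simp
  qed
qed

end
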